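(* Let $p$ be an odd prime, $a_1,a_2,a_3\in\mathbb{F}_p$, $s=3+a_1+a_2+a_3$, and let $x\neq(0,0,0)$ be a solution in $\mathbb{F}_p^3$ of \[ x_1^2+x_2^2+x_3^2+a_1x_2x_3+a_2x_1x_3+a_3x_1x_2 = s\,x_1x_2x_3 \] with $x_i = 0$ for some index $i$ (indices modulo $3$). Let $m_k$ ($k=1,2,3$) replace $x_k$ by $-x_k + s x_{k-1}x_{k+1} - a_{k+1}x_{k-1} - a_{k-1}x_{k+1}$ leaving the other coordinates unchanged, let $\rho = m_{i+1}\circ m_{i-1}$, and let $N$ be the order of $\rho$ as a permutation of the nonzero solutions with $i$-th coordinate $0$. If $N\geq 2$, then the $2N$ points \[ x,\ \rho x,\ \ldots,\ \rho^{N-1}x,\ m_{i-1}x,\ m_{i-1}\rho x,\ \ldots,\ m_{i-1}\rho^{N-1}x \] are pairwise distinct. *)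

theory Defs
  imports "HOL-Analysis.Finite_Cartesian_Product" "HOL-Library.Numeral_Type"
          "HOL-Computational_Algebra.Primes"
begin

text \<open>Points of F_p^3 are vectors indexed by the type 3 (integers mod 3), so that
  index arithmetic k-1, k+1 is automatically modulo 3. Index 3 coincides with index 0.\<close>

definition s_param :: "'a::field ^ 3 \<Rightarrow> 'a" where
  "s_param a = 3 + a$1 + a$2 + a$3"

definition markov_eq :: "'a::field ^ 3 \<Rightarrow> 'a ^ 3 \<Rightarrow> bool" where
  "markov_eq a x \<longleftrightarrow>
     (x$1)^2 + (x$2)^2 + (x$3)^2 + a$1 * x$2 * x$3 + a$2 * x$1 * x$3 + a$3 * x$1 * x$2
       = s_param a * x$1 * x$2 * x$3"

definition move :: "'a::field ^ 3 \<Rightarrow> 3 \<Rightarrow> 'a ^ 3 \<Rightarrow> 'a ^ 3" where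
  "move a k x = (\<chi> j. if j = k then
       - x$k + s_param a * x$(k-1) * x$(k+1) - a$(k+1) * x$(k-1) - a$(k-1) * x$(k+1)
     else x$j)"

definition rot :: "'a::field ^ 3 \<Rightarrow> 3 \<Rightarrow> 'a ^ 3 \<Rightarrow> 'a ^ 3" where
  "rot a i = move a (i+1) \<circ> move a (i-1)"

definition sol_plane :: "'a::field ^ 3 \<Rightarrow> 3 \<Rightarrow> ('a ^ 3) set" where
  "sol_plane a i = {y. markov_eq a y \<and> y \<noteq> 0 \<and> y$i = 0}"

definition rot_order :: "'a::field ^ 3 \<Rightarrow> 3 \<Rightarrow> nat" where
  "rot_order a i = (LEAST n. n > 0 \<and> (\<forall>y\<in>sol_plane a i. (rot a i ^^ n) y = y))"

end

theory Submission imports Defs "HOL-Analysis.Cartesian_Space" begin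

lemma idx: fixes i::3 shows "i - 1 - 1 = i + 1" "i - 1 + 1 = i" "i + 1 + 1 = i - 1" "i + 1 - 1 = i"
  "i+1 \<noteq> i" "i - 1 \<noteq> i" "i+1 \<noteq> i-1" "i - 2 = i + 1" "2 + i = i - 1" "i + 2 = i - 1"
  using exhaust_3[of i] by auto

lemma all3: fixes i j :: 3 shows "j = i \<or> j = i+1 \<or> j = i-1"
  using exhaust_3[of i] exhaust_3[of j] by auto

lemma vec3_eq: fixes y z :: "'a ^ 3"
  shows "y = z \<longleftrightarrow> y$i = z$i \<and> y$(i+1) = z$(i+1) \<and> y$(i-1) = z$(i-1)"
proof (intro iffI)
  assume "y = z" then show "y$i = z$i \<and> y$(i+1) = z$(i+1) \<and> y$(i-1) = z$(i-1)" by simp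
next
  assume h: "y$i = z$i \<and> y$(i+1) = z$(i+1) \<and> y$(i-1) = z$(i-1)"
  show "y = z" unfolding vec_eq_iff
  proof
    fix j :: 3
    from all3[where j=j and i=i] h show "y$j = z$j" by (elim disjE) auto
  qed
qed

lemma move_invol: "move a k (move a k y) = y"
  unfolding move_def vec_eq_iff using idx[of k] by auto

lemma m2_comp: assumes "y$i = 0"
  shows "move a (i-1) y $ i = 0" "move a (i-1) y $ (i+1) = y$(i+1)"
    "move a (i-1) y $ (i-1) = - y$(i-1) - a$i * y$(i+1)"
  using assms unfolding move_def by (auto simp: idx)

lemma m1_comp: assumes "y$i = 0"
  shows "move a (i+1) y $ i = 0" "move a (i+1) y $ (i-1) = y$(i-1)"
    "move a (i+1) y $ (i+1) = - y$(i+1) - a$i * y$(i-1)"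
  using assms unfolding move_def by (auto simp: idx)

lemma idx_cases: fixes i :: 3 shows
  "(i=1 \<and> i+1=2 \<and> i-1=3) \<or> (i=2 \<and> i+1=3 \<and> i-1=1) \<or> (i=3 \<and> i+1=1 \<and> i-1=2)"
  using exhaust_3[of i] by auto

lemma markov_plane: assumes "y$i = 0"
  shows "markov_eq a y \<longleftrightarrow> (y$(i+1))^2 + (y$(i-1))^2 + a$i * y$(i+1) * y$(i-1) = 0"
  using idx_cases[of i]
proof (elim disjE conjE)
  assume h: "i = 1" "i+1 = 2" "i - 1 = 3"
  show ?thesis unfolding h(2,3) unfolding h(1) markov_eq_def using assms h by (simp add: algebra_simps)
next
  assume h: "i = 2" "i+1 = 3" "i - 1 = 1"
  show ?thesis unfolding h(2,3) unfolding h(1) markov_eq_def using assms h by (simp add: algebra_simps)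
next
  assume h: "i = 3" "i+1 = 1" "i - 1 = 2"
  show ?thesis unfolding h(2,3) unfolding h(1) markov_eq_def using assms h by (simp add: algebra_simps)
qed


definition dt :: "3 \<Rightarrow> 'a::field ^ 3 \<Rightarrow> 'a ^ 3 \<Rightarrow> 'a" where
  "dt i y z = y$(i+1) * z$(i-1) - y$(i-1) * z$(i+1)"

lemma rot_comp: assumes "y$i = 0"
  shows "rot a i y $ i = 0"
    "rot a i y $ (i+1) = - y$(i+1) - a$i * (- y$(i-1) - a$i * y$(i+1))"
    "rot a i y $ (i-1) = - y$(i-1) - a$i * y$(i+1)"
  using assms by (simp_all add: rot_def m1_comp m2_comp)

lemma move_inj: "inj (move a k)"
  by (metis injI move_invol)

lemma rot_inj: "inj (rot a i)"
  unfolding rot_def by (intro inj_compose move_inj)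

lemma move_zero: "move a k 0 = 0"
  unfolding move_def by (simp add: vec_eq_iff)

lemma rot_zero: "rot a i 0 = 0"
  by (simp add: rot_def move_zero)

lemma nonzero_plane: fixes y :: "'a::zero ^ 3" assumes "y$i = 0"
  shows "y \<noteq> 0 \<longleftrightarrow> (y$(i+1) \<noteq> 0 \<or> y$(i-1) \<noteq> 0)"
  using assms vec3_eq[where y=y and z=0 and i=i] by auto

lemma Q_m2: fixes p q r :: "'a::field"
  shows "p^2 + (- q - r*p)^2 + r * p * (- q - r*p) = p^2 + q^2 + r*p*q"
  by (simp add: power2_eq_square algebra_simps)

lemma Q_m1: fixes p q r :: "'a::field"
  shows "(- p - r*q)^2 + q^2 + r * (- p - r*q) * q = p^2 + q^2 + r*p*q"
  by (simp add: power2_eq_square algebra_simps)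

lemma rot_plane: assumes "y \<in> sol_plane a i" shows "rot a i y \<in> sol_plane a i"
proof -
  have y: "markov_eq a y" "y \<noteq> 0" "y$i = 0" using assms by (auto simp: sol_plane_def)
  have "rot a i y \<noteq> 0" using y(2) rot_zero rot_inj by (metis injD)
  moreover have "markov_eq a (rot a i y) = markov_eq a y"
    by (simp only: markov_plane[OF rot_comp(1)[OF y(3)]] markov_plane[OF y(3)] rot_comp[OF y(3)] Q_m1 Q_m2)
  ultimately show ?thesis using y rot_comp(1)[OF y(3)] by (simp add: sol_plane_def)
qed

lemma m2_plane: assumes "y \<in> sol_plane a i" shows "move a (i-1) y \<in> sol_plane a i"
proof -
  have y: "markov_eq a y" "y \<noteq> 0" "y$i = 0" using assms by (auto simp: sol_plane_def)
  have "move a (i-1) y \<noteq> 0" using y(2) move_zero move_inj by (metis injD)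
  moreover have "markov_eq a (move a (i-1) y) = markov_eq a y"
    by (simp only: markov_plane[OF m2_comp(1)[OF y(3)]] markov_plane[OF y(3)] m2_comp[OF y(3)] Q_m2)
  ultimately show ?thesis using y m2_comp(1)[OF y(3)] by (simp add: sol_plane_def)
qed

lemma pow_plane: assumes "y \<in> sol_plane a i" shows "(rot a i ^^ n) y \<in> sol_plane a i"
  by (induction n) (simp_all add: assms rot_plane)

lemma rot_m2_rot: "rot a i (move a (i-1) (rot a i w)) = move a (i-1) w"
  by (simp add: rot_def move_invol)

lemma dihedral: "(rot a i ^^ d) (move a (i-1) ((rot a i ^^ d) y)) = move a (i-1) y"
proof (induction d arbitrary: y)
  case 0 then show ?case by simp
next
  case (Suc d)
  have e1: "(rot a i ^^ Suc d) z = (rot a i ^^ d) (rot a i z)" for z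
    by (simp only: funpow_Suc_right o_apply)
  have e2: "(rot a i ^^ Suc d) y = rot a i ((rot a i ^^ d) y)" by simp
  have "(rot a i ^^ Suc d) (move a (i-1) ((rot a i ^^ Suc d) y))
      = (rot a i ^^ d) (rot a i (move a (i-1) (rot a i ((rot a i ^^ d) y))))"
    unfolding e2 unfolding e1 ..
  also have "\<dots> = (rot a i ^^ d) (move a (i-1) ((rot a i ^^ d) y))"
    by (simp add: rot_m2_rot)
  finally show ?case using Suc by simp
qed

lemma lin: "\<exists>A B C D. \<forall>y. y$i = 0 \<longrightarrow> (rot a i ^^ d) y $ i = 0 \<and>
   (rot a i ^^ d) y $ (i+1) = A * y$(i+1) + B * y$(i-1) \<and>
   (rot a i ^^ d) y $ (i-1) = C * y$(i+1) + D * y$(i-1)"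
proof (induction d)
  case 0 show ?case by (rule exI[of _ 1], rule exI[of _ 0], rule exI[of _ 0], rule exI[of _ 1]) simp
next
  case (Suc d)
  then obtain A B C D where H: "\<forall>y. y$i = 0 \<longrightarrow> (rot a i ^^ d) y $ i = 0 \<and>
   (rot a i ^^ d) y $ (i+1) = A * y$(i+1) + B * y$(i-1) \<and>
   (rot a i ^^ d) y $ (i-1) = C * y$(i+1) + D * y$(i-1)" by blast
  let ?c = "a$i"
  show ?case
  proof (intro exI allI impI)
    fix y :: "'a ^ 3" assume y: "y$i = 0"
    let ?w = "(rot a i ^^ d) y"
    have w: "?w$i = 0" "?w $ (i+1) = A * y$(i+1) + B * y$(i-1)" "?w $ (i-1) = C * y$(i+1) + D * y$(i-1)"
      using H[rule_format, OF y] by blast+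
    show "(rot a i ^^ Suc d) y $ i = 0 \<and>
      (rot a i ^^ Suc d) y $ (i+1) = ((?c^2 - 1) * A + ?c * C) * y$(i+1) + ((?c^2 - 1) * B + ?c * D) * y$(i-1) \<and>
      (rot a i ^^ Suc d) y $ (i-1) = (- C - ?c * A) * y$(i+1) + (- D - ?c * B) * y$(i-1)"
    proof (intro conjI)
      have r: "(rot a i ^^ Suc d) y = rot a i ?w" by simp
      show "(rot a i ^^ Suc d) y $ i = 0" unfolding r by (rule rot_comp(1)[OF w(1)])
      show "(rot a i ^^ Suc d) y $ (i+1) = ((?c^2 - 1) * A + ?c * C) * y$(i+1) + ((?c^2 - 1) * B + ?c * D) * y$(i-1)"
        unfolding r rot_comp(2)[OF w(1)] w(2) w(3) by (simp add: algebra_simps power2_eq_square)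
      show "(rot a i ^^ Suc d) y $ (i-1) = (- C - ?c * A) * y$(i+1) + (- D - ?c * B) * y$(i-1)"
        unfolding r rot_comp(3)[OF w(1)] w(2) w(3) by (simp add: algebra_simps)
    qed
  qed
qed


lemma cramer: fixes A B u1 v1 u2 v2 :: "'a::field"
  assumes "A * u1 + B * v1 = u1" "A * u2 + B * v2 = u2" "u1 * v2 - v1 * u2 \<noteq> 0"
  shows "A = 1" "B = 0"
proof -
  have "(A - 1) * (u1 * v2 - v1 * u2) = ((A * u1 + B * v1) - u1) * v2 - ((A * u2 + B * v2) - u2) * v1"
    by (simp add: algebra_simps)
  also have "\<dots> = 0" using assms by simp
  finally show "A = 1" using assms(3) by simp
  have "B * (u1 * v2 - v1 * u2) = ((A * u2 + B * v2) - u2) * u1 - ((A * u1 + B * v1) - u1) * u2"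
    by (simp add: algebra_simps)
  also have "\<dots> = 0" using assms by simp
  finally show "B = 0" using assms(3) by simp
qed

lemma cramer2: fixes C D u1 v1 u2 v2 :: "'a::field"
  assumes "C * u1 + D * v1 = v1" "C * u2 + D * v2 = v2" "u1 * v2 - v1 * u2 \<noteq> 0"
  shows "C = 0" "D = 1"
proof -
  have "C * (u1 * v2 - v1 * u2) = ((C * u1 + D * v1) - v1) * v2 - ((C * u2 + D * v2) - v2) * v1"
    by (simp add: algebra_simps)
  also have "\<dots> = 0" using assms by simp
  finally show "C = 0" using assms(3) by simp
  have "(D - 1) * (u1 * v2 - v1 * u2) = ((C * u2 + D * v2) - v2) * u1 - ((C * u1 + D * v1) - v1) * u2"
    by (simp add: algebra_simps)
  also have "\<dots> = 0" using assms by simp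
  finally show "D = 1" using assms(3) by simp
qed

lemma fix_all:
  assumes "y$i = 0" "z$i = 0" "dt i y z \<noteq> 0" "(rot a i ^^ d) y = y" "(rot a i ^^ d) z = z"
    and "w$i = 0"
  shows "(rot a i ^^ d) w = w"
proof -
  obtain A B C D where H: "\<forall>y. y$i = 0 \<longrightarrow> (rot a i ^^ d) y $ i = 0 \<and>
   (rot a i ^^ d) y $ (i+1) = A * y$(i+1) + B * y$(i-1) \<and>
   (rot a i ^^ d) y $ (i-1) = C * y$(i+1) + D * y$(i-1)" using lin by blast
  have e1: "A * y$(i+1) + B * y$(i-1) = y$(i+1)" "C * y$(i+1) + D * y$(i-1) = y$(i-1)"
    using H assms(1,4) by metis+
  have e2: "A * z$(i+1) + B * z$(i-1) = z$(i+1)" "C * z$(i+1) + D * z$(i-1) = z$(i-1)"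
    using H assms(2,5) by metis+
  have d: "y$(i+1) * z$(i-1) - y$(i-1) * z$(i+1) \<noteq> 0" using assms(3) by (simp add: dt_def)
  have "A = 1" "B = 0" using cramer[OF e1(1) e2(1) d] by auto
  moreover have "C = 0" "D = 1" using cramer2[OF e1(2) e2(2) d] by auto
  ultimately show ?thesis using H assms(6) vec3_eq[where y="(rot a i ^^ d) w" and z=w and i=i] by simp
qed

lemma par_rot: assumes "y$i = 0" "markov_eq a y" shows "dt i y (rot a i y) = 0"
proof -
  have "dt i y (rot a i y) = - a$i * ((y$(i+1))^2 + (y$(i-1))^2 + a$i * y$(i+1) * y$(i-1))"
    unfolding dt_def rot_comp[OF assms(1)] by (simp add: algebra_simps power2_eq_square)
  then show ?thesis using assms markov_plane[OF assms(1)] by simp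
qed

lemma par_trans: fixes z w r :: "'a::field ^ 3"
  assumes "dt i z w = 0" "dt i w r = 0" "w$(i+1) \<noteq> 0 \<or> w$(i-1) \<noteq> 0"
  shows "dt i z r = 0"
proof -
  let ?z1 = "z$(i+1)" let ?z2 = "z$(i-1)" let ?w1 = "w$(i+1)" let ?w2 = "w$(i-1)"
  let ?r1 = "r$(i+1)" let ?r2 = "r$(i-1)"
  have h1: "?z1 * ?w2 - ?z2 * ?w1 = 0" "?w1 * ?r2 - ?w2 * ?r1 = 0" using assms(1,2) by (simp_all add: dt_def)
  have "?w1 * (?z1 * ?r2 - ?z2 * ?r1) = ?z1 * (?w1 * ?r2 - ?w2 * ?r1) + ?r1 * (?z1 * ?w2 - ?z2 * ?w1)"
    by (simp add: algebra_simps)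
  then have a1: "?w1 * (?z1 * ?r2 - ?z2 * ?r1) = 0" using h1 by simp
  have "?w2 * (?z1 * ?r2 - ?z2 * ?r1) = ?z2 * (?w1 * ?r2 - ?w2 * ?r1) + ?r2 * (?z1 * ?w2 - ?z2 * ?w1)"
    by (simp add: algebra_simps)
  then have a2: "?w2 * (?z1 * ?r2 - ?z2 * ?r1) = 0" using h1 by simp
  show ?thesis using a1 a2 assms(3) by (auto simp: dt_def)
qed

lemma par_pow: assumes "y \<in> sol_plane a i" shows "dt i y ((rot a i ^^ n) y) = 0"
proof (induction n)
  case 0 show ?case by (simp add: dt_def)
next
  case (Suc n)
  let ?w = "(rot a i ^^ n) y"
  have w: "?w \<in> sol_plane a i" using pow_plane assms by blast
  then have "dt i ?w (rot a i ?w) = 0" using par_rot by (auto simp: sol_plane_def)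
  moreover have "?w$(i+1) \<noteq> 0 \<or> ?w$(i-1) \<noteq> 0" using w nonzero_plane by (auto simp: sol_plane_def)
  ultimately show ?case using Suc par_trans by simp
qed

lemma nonpar_m2: assumes "y \<in> sol_plane a i" "(a$i)^2 \<noteq> 4"
  shows "dt i y (move a (i-1) y) \<noteq> 0"
proof
  assume h: "dt i y (move a (i-1) y) = 0"
  have y: "markov_eq a y" "y \<noteq> 0" "y$i = 0" using assms by (auto simp: sol_plane_def)
  let ?u = "y$(i+1)" let ?v = "y$(i-1)" let ?c = "a$i"
  have Q: "?u^2 + ?v^2 + ?c * ?u * ?v = 0" using y markov_plane by blast
  have "dt i y (move a (i-1) y) = - ?u * (2 * ?v + ?c * ?u)"
    unfolding dt_def m2_comp[OF y(3)] by (simp add: algebra_simps)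
  then have "?u = 0 \<or> 2 * ?v + ?c * ?u = 0" using h by simp
  then show False
  proof
    assume "?u = 0"
    then have "?v = 0" using Q by simp
    then show False using y `?u = 0` nonzero_plane by blast
  next
    assume e: "2 * ?v + ?c * ?u = 0"
    have "4 * (?u^2 + ?v^2 + ?c * ?u * ?v) = (2 * ?v + ?c * ?u)^2 + (4 - ?c^2) * ?u^2"
      by (simp add: algebra_simps power2_eq_square)
    then have "(4 - ?c^2) * ?u^2 = 0" using Q e by simp
    then have "?u = 0" using assms(2) by simp
    then have "?v = 0" using Q by simp
    then show False using y `?u = 0` nonzero_plane by blast
  qed
qed

lemma c4_fix: assumes "y \<in> sol_plane a i" "(a$i)^2 = 4" shows "rot a i y = y"
proof -
  have y: "markov_eq a y" "y \<noteq> 0" "y$i = 0" using assms by (auto simp: sol_plane_def)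
  let ?u = "y$(i+1)" let ?v = "y$(i-1)" let ?c = "a$i"
  have Q: "?u^2 + ?v^2 + ?c * ?u * ?v = 0" using y markov_plane by blast
  have "(?c - 2) * (?c + 2) = 0" using assms(2) by (simp add: algebra_simps power2_eq_square)
  then have "?c = 2 \<or> ?c = -2" by (simp add: eq_neg_iff_add_eq_0)
  then have k: "2 * ?u + ?c * ?v = 0 \<and> 2 * ?v + ?c * ?u = 0"
  proof
    assume c: "?c = 2"
    have "(?u + ?v)^2 = 0" using Q c by (simp add: algebra_simps power2_eq_square)
    then have s0: "?u + ?v = 0" by simp
    have "2 * ?u + ?c * ?v = 2 * (?u + ?v)" "2 * ?v + ?c * ?u = 2 * (?u + ?v)" using c by (simp_all add: algebra_simps)
    then show ?thesis using s0 by simp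
  next
    assume c: "?c = -2"
    have "(?u - ?v)^2 = 0" using Q c by (simp add: algebra_simps power2_eq_square)
    then have s0: "?u - ?v = 0" by simp
    have "2 * ?u + ?c * ?v = 2 * (?u - ?v)" "2 * ?v + ?c * ?u = - 2 * (?u - ?v)" using c by (simp_all add: algebra_simps)
    then show ?thesis using s0 by simp
  qed
  have "rot a i y $ (i+1) = ?u + (2 * ?u + ?c * ?v) + (?c^2 - 4) * ?u"
    unfolding rot_comp[OF y(3)] by (simp add: algebra_simps power2_eq_square)
  also have "\<dots> = ?u" unfolding conjunct1[OF k] using assms(2) by simp
  finally have 1: "rot a i y $ (i+1) = ?u" .
  have "rot a i y $ (i-1) = ?v - (2 * ?v + ?c * ?u)"
    unfolding rot_comp[OF y(3)] by (simp add: algebra_simps)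
  also have "\<dots> = ?v" unfolding conjunct2[OF k] by simp
  finally have 2: "rot a i y $ (i-1) = ?v" .
  show ?thesis using 1 2 rot_comp(1)[OF y(3)] y(3) vec3_eq[where y="rot a i y" and z=y and i=i] by simp
qed


theorem proposition2p2:
  fixes a x :: "'a::{field,finite} ^ 3" and i :: 3
  assumes "prime CARD('a)" and "odd CARD('a)"
    and "markov_eq a x" and "x \<noteq> 0" and "x$i = 0"
    and "rot_order a i \<ge> 2"
  shows "distinct (map (\<lambda>j. (rot a i ^^ j) x) [0..<rot_order a i]
                   @ map (\<lambda>j. move a (i-1) ((rot a i ^^ j) x)) [0..<rot_order a i])"
proof -
  define N where "N = rot_order a i"
  define R where "R = rot a i"
  define m where "m = move a (i-1)"
  have xP: "x \<in> sol_plane a i" using assms by (simp add: sol_plane_def)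
  have notfix: "\<exists>y\<in>sol_plane a i. (R ^^ d) y \<noteq> y" if "0 < d" "d < N" for d
    using not_less_Least[of d "\<lambda>n. n > 0 \<and> (\<forall>y\<in>sol_plane a i. (rot a i ^^ n) y = y)"] that
    unfolding N_def R_def rot_order_def by auto
  have c4: "(a$i)^2 \<noteq> 4"
  proof
    assume "(a$i)^2 = 4"
    then have "\<forall>y\<in>sol_plane a i. (R ^^ 1) y = y" using c4_fix unfolding R_def by auto
    moreover have "(1::nat) < N" using assms(6) unfolding N_def by simp
    ultimately show False using notfix by fastforce
  qed
  have orb: "(R ^^ d) x \<noteq> x" if "0 < d" "d < N" for d
  proof
    assume e: "(R ^^ d) x = x"
    have "(R ^^ d) (m x) = m x"
      using dihedral[where a=a and i=i and d=d and y=x] e unfolding R_def m_def by simp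
    moreover have "dt i x (m x) \<noteq> 0" using nonpar_m2[OF xP c4] unfolding m_def .
    moreover have "(m x)$i = 0" using m2_comp(1)[OF assms(5)] unfolding m_def .
    ultimately have "\<forall>w. w$i = 0 \<longrightarrow> (R ^^ d) w = w"
      using fix_all[where y=x and i=i and z="m x" and a=a and d=d] e assms(5) unfolding R_def by blast
    then show False using notfix[OF that] by (auto simp: sol_plane_def)
  qed
  have injR: "inj (R ^^ n)" for n unfolding R_def by (intro inj_fn rot_inj)
  have injm: "inj m" unfolding m_def by (rule move_inj)
  have A: "(R ^^ j) x \<noteq> (R ^^ k) x" if "j < k" "k < N" for j k
  proof
    assume e: "(R ^^ j) x = (R ^^ k) x"
    have "(R ^^ k) x = (R ^^ j) ((R ^^ (k - j)) x)"
      using that by (metis funpow_add le_add_diff_inverse less_imp_le o_apply)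
    then have "x = (R ^^ (k - j)) x" using e injR by (metis injD)
    moreover have "0 < k - j" "k - j < N" using that by auto
    ultimately show False using orb[of "k - j"] by simp
  qed
  have inj1: "inj_on (\<lambda>j. (R ^^ j) x) {0..<N}"
  proof (rule inj_onI)
    fix j k assume h: "j \<in> {0..<N}" "k \<in> {0..<N}" "(R ^^ j) x = (R ^^ k) x"
    then have "j < N" "k < N" by auto
    show "j = k"
    proof (cases j k rule: linorder_cases)
      case less then show ?thesis using A[OF less \<open>k < N\<close>] h(3) by blast
    next
      case greater then show ?thesis using A[OF greater \<open>j < N\<close>] h(3) by metis
    qed
  qed
  have inj2: "inj_on (\<lambda>j. m ((R ^^ j) x)) {0..<N}"
  proof (rule inj_onI)
    fix j k assume h: "j \<in> {0..<N}" "k \<in> {0..<N}" "m ((R ^^ j) x) = m ((R ^^ k) x)"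
    then have "(R ^^ j) x = (R ^^ k) x" using injm by (meson injD)
    then show "j = k" using inj1 h(1,2) by (meson inj_onD)
  qed
  have disj: "(R ^^ j) x \<noteq> m ((R ^^ k) x)" for j k
  proof
    assume e: "(R ^^ j) x = m ((R ^^ k) x)"
    let ?z = "(R ^^ k) x"
    have zP: "?z \<in> sol_plane a i" using pow_plane[OF xP] unfolding R_def .
    have "dt i x (m ?z) = 0" using par_pow[OF xP, of j] e unfolding R_def by simp
    moreover have "dt i ?z x = 0" using par_pow[OF xP, of k] unfolding R_def dt_def
      by (simp add: algebra_simps)
    moreover have "x$(i+1) \<noteq> 0 \<or> x$(i-1) \<noteq> 0" using nonzero_plane assms(4,5) by blast
    ultimately have "dt i ?z (m ?z) = 0" using par_trans by blast
    then show False using nonpar_m2[OF zP c4] unfolding m_def by simp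
  qed
  have s: "set [0..<N] = {0..<N}" by simp
  have d1: "distinct (map (\<lambda>j. (R ^^ j) x) [0..<N])"
    unfolding distinct_map s using inj1 by simp
  have d2: "distinct (map (\<lambda>j. m ((R ^^ j) x)) [0..<N])"
    unfolding distinct_map s using inj2 by simp
  have d3: "set (map (\<lambda>j. (R ^^ j) x) [0..<N]) \<inter> set (map (\<lambda>j. m ((R ^^ j) x)) [0..<N]) = {}"
    unfolding set_map using disj by blast
  have "distinct (map (\<lambda>j. (R ^^ j) x) [0..<N] @ map (\<lambda>j. m ((R ^^ j) x)) [0..<N])"
    unfolding distinct_append using d1 d2 d3 by (intro conjI)
  then show ?thesis unfolding N_def R_def m_def .
qed

end
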